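(* If expressions $e_1$ and $e_2$ are compatible, then for every $\sigma\in\Sigma$ and all $m_1,m_2\in\mathcal W(\Sigma)$, the sum $[\![e_1]\!](\sigma)\cdot m_1+[\![e_2]\!](\sigma)\cdot m_2$ is defined (and is an element of $\mathcal W(\Sigma)$).
   Context: $\mathcal A=\langle U,+,\cdot,\mathbf 0,\mathbf 1\rangle$ is a partial semiring ($+$ commutative, associative, possibly partial, unit $\mathbf 0$; $\cdot$ total, associative, unit $\mathbf 1$; two-sided distributivity; $\mathbf 0$ annihilates), naturally ordered ($u\le v$ iff $\exists w.\,u+w=v$ is a partial order), Scott continuous ($+$ and $\cdot$ preserve suprema of directed sets in each argument), with a top element. Infinite sums are suprema of finite partial sums. $\mathcal W(\Sigma)$: maps $m:\Sigma\to U$ with countable support $\mathrm{supp}(m)=\{\sigma:m(\sigma)\neq\mathbf 0\}$ and defined mass $|m|=\sum_{\sigma\in\mathrm{supp}(m)}m(\sigma)$; $u\cdot m$ and $m_1+m_2$ are pointwise. An expression $e$ is either a test $b$ (a Boolean combination of $\mathsf{true},\mathsf{false}$ and primitive tests $t\subseteq\Sigma$, evaluating to $[\![b]\!](\sigma)\in\{\mathbf 0,\mathbf 1\}$ with $[\![t]\!](\sigma)=\mathbf 1$ iff $\sigma\in t$) or a weight $u\in U$ with $[\![u]\!](\sigma)=u$. Expressions $e_1,e_2$ are compatible if $[\![e_1]\!](\sigma)+[\![e_2]\!](\sigma)$ is defined for every $\sigma\in\Sigma$. *)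

theory Defs
  imports Main "HOL-Library.Countable_Set"
begin

definition nat_le :: "('u \<Rightarrow> 'u \<Rightarrow> 'u option) \<Rightarrow> 'u \<Rightarrow> 'u \<Rightarrow> bool" where
  "nat_le pl u v \<longleftrightarrow> (\<exists>w. pl u w = Some v)"

definition is_lub_in :: "('u \<Rightarrow> 'u \<Rightarrow> bool) \<Rightarrow> 'u set \<Rightarrow> 'u \<Rightarrow> bool" where
  "is_lub_in le D s \<longleftrightarrow> (\<forall>x\<in>D. le x s) \<and> (\<forall>b. (\<forall>x\<in>D. le x b) \<longrightarrow> le s b)"

definition directed_in :: "('u \<Rightarrow> 'u \<Rightarrow> bool) \<Rightarrow> 'u set \<Rightarrow> bool" where
  "directed_in le D \<longleftrightarrow> D \<noteq> {} \<and> (\<forall>x\<in>D. \<forall>y\<in>D. \<exists>z\<in>D. le x z \<and> le y z)"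

definition partial_semiring ::
  "('u \<Rightarrow> 'u \<Rightarrow> 'u option) \<Rightarrow> ('u \<Rightarrow> 'u \<Rightarrow> 'u) \<Rightarrow> 'u \<Rightarrow> 'u \<Rightarrow> bool" where
  "partial_semiring pl tm z one \<longleftrightarrow>
     (\<forall>a b. pl a b = pl b a) \<and>
     (\<forall>a b c. Option.bind (pl a b) (\<lambda>x. pl x c) = Option.bind (pl b c) (\<lambda>y. pl a y)) \<and>
     (\<forall>a. pl z a = Some a) \<and>
     (\<forall>a b c. tm (tm a b) c = tm a (tm b c)) \<and>
     (\<forall>a. tm one a = a \<and> tm a one = a) \<and>
     (\<forall>u v w s. pl v w = Some s \<longrightarrow> pl (tm u v) (tm u w) = Some (tm u s)) \<and>
     (\<forall>u v w s. pl v w = Some s \<longrightarrow> pl (tm v u) (tm w u) = Some (tm s u)) \<and>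
     (\<forall>a. tm z a = z \<and> tm a z = z)"

text \<open>Naturally ordered: the natural preorder is a partial order (antisymmetric;
  reflexivity and transitivity are automatic but stated for clarity).\<close>
definition naturally_ordered :: "('u \<Rightarrow> 'u \<Rightarrow> 'u option) \<Rightarrow> bool" where
  "naturally_ordered pl \<longleftrightarrow>
     (\<forall>u. nat_le pl u u) \<and>
     (\<forall>u v w. nat_le pl u v \<longrightarrow> nat_le pl v w \<longrightarrow> nat_le pl u w) \<and>
     (\<forall>u v. nat_le pl u v \<longrightarrow> nat_le pl v u \<longrightarrow> u = v)"

definition scott_continuous ::
  "('u \<Rightarrow> 'u \<Rightarrow> 'u option) \<Rightarrow> ('u \<Rightarrow> 'u \<Rightarrow> 'u) \<Rightarrow> bool" where
  "scott_continuous pl tm \<longleftrightarrow>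
     (\<forall>D. directed_in (nat_le pl) D \<longrightarrow> (\<exists>s. is_lub_in (nat_le pl) D s)) \<and>
     (\<forall>D d u s. directed_in (nat_le pl) D \<longrightarrow> is_lub_in (nat_le pl) D d \<longrightarrow>
        pl u d = Some s \<longrightarrow>
        (\<forall>x\<in>D. pl u x \<noteq> None) \<and> is_lub_in (nat_le pl) ((\<lambda>x. the (pl u x)) ` D) s) \<and>
     (\<forall>D d u. directed_in (nat_le pl) D \<longrightarrow> is_lub_in (nat_le pl) D d \<longrightarrow>
        is_lub_in (nat_le pl) ((\<lambda>x. tm u x) ` D) (tm u d) \<and>
        is_lub_in (nat_le pl) ((\<lambda>x. tm x u) ` D) (tm d u))"

definition has_top :: "('u \<Rightarrow> 'u \<Rightarrow> 'u option) \<Rightarrow> bool" where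
  "has_top pl \<longleftrightarrow> (\<exists>t. \<forall>u. nat_le pl u t)"

definition pcs_semiring ::
  "('u \<Rightarrow> 'u \<Rightarrow> 'u option) \<Rightarrow> ('u \<Rightarrow> 'u \<Rightarrow> 'u) \<Rightarrow> 'u \<Rightarrow> 'u \<Rightarrow> bool" where
  "pcs_semiring pl tm z one \<longleftrightarrow> partial_semiring pl tm z one \<and> naturally_ordered pl
     \<and> scott_continuous pl tm \<and> has_top pl"

text \<open>Finite sums (partial): sum of a list, and of a finite set via some enumeration
  (independent of the enumeration by commutativity/associativity).\<close>
fun lsum :: "('u \<Rightarrow> 'u \<Rightarrow> 'u option) \<Rightarrow> 'u \<Rightarrow> 'u list \<Rightarrow> 'u option" where
  "lsum pl z [] = Some z"
| "lsum pl z (x # xs) = Option.bind (lsum pl z xs) (\<lambda>s. pl x s)"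

definition fsum :: "('u \<Rightarrow> 'u \<Rightarrow> 'u option) \<Rightarrow> 'u \<Rightarrow> ('s \<Rightarrow> 'u) \<Rightarrow> 's set \<Rightarrow> 'u option" where
  "fsum pl z f F = lsum pl z (map f (SOME xs. distinct xs \<and> set xs = F))"

definition supp :: "'u \<Rightarrow> ('s \<Rightarrow> 'u) \<Rightarrow> 's set" where
  "supp z m = {\<sigma>. m \<sigma> \<noteq> z}"

definition has_sum_in :: "('u \<Rightarrow> 'u \<Rightarrow> 'u option) \<Rightarrow> 'u \<Rightarrow> ('s \<Rightarrow> 'u) \<Rightarrow> 's set \<Rightarrow> 'u \<Rightarrow> bool" where
  "has_sum_in pl z f S s \<longleftrightarrow>
     (\<forall>F. finite F \<longrightarrow> F \<subseteq> S \<longrightarrow> fsum pl z f F \<noteq> None) \<and>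
     is_lub_in (nat_le pl) {the (fsum pl z f F) | F. finite F \<and> F \<subseteq> S} s"

definition W :: "('u \<Rightarrow> 'u \<Rightarrow> 'u option) \<Rightarrow> 'u \<Rightarrow> ('s \<Rightarrow> 'u) set" where
  "W pl z = {m. countable (supp z m) \<and> (\<exists>s. has_sum_in pl z m (supp z m) s)}"

datatype 's test = TTrue | TFalse | Prim "'s set" | TNot "'s test"
  | TAnd "'s test" "'s test" | TOr "'s test" "'s test"

fun eval_test :: "'s test \<Rightarrow> 's \<Rightarrow> bool" where
  "eval_test TTrue \<sigma> = True"
| "eval_test TFalse \<sigma> = False"
| "eval_test (Prim t) \<sigma> = (\<sigma> \<in> t)"
| "eval_test (TNot b) \<sigma> = (\<not> eval_test b \<sigma>)"
| "eval_test (TAnd b c) \<sigma> = (eval_test b \<sigma> \<and> eval_test c \<sigma>)"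
| "eval_test (TOr b c) \<sigma> = (eval_test b \<sigma> \<or> eval_test c \<sigma>)"

datatype ('s, 'u) expr = Test "'s test" | Weight 'u

fun eval_expr :: "'u \<Rightarrow> 'u \<Rightarrow> ('s, 'u) expr \<Rightarrow> 's \<Rightarrow> 'u" where
  "eval_expr z one (Test b) \<sigma> = (if eval_test b \<sigma> then one else z)"
| "eval_expr z one (Weight u) \<sigma> = u"

definition compatible ::
  "('u \<Rightarrow> 'u \<Rightarrow> 'u option) \<Rightarrow> 'u \<Rightarrow> 'u \<Rightarrow> ('s, 'u) expr \<Rightarrow> ('s, 'u) expr \<Rightarrow> bool" where
  "compatible pl z one e1 e2 \<longleftrightarrow> (\<forall>\<sigma>. pl (eval_expr z one e1 \<sigma>) (eval_expr z one e2 \<sigma>) \<noteq> None)"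

end

theory Submission
  imports Defs "HOL-Library.Multiset"
begin

lemma ps_facts:
  assumes "partial_semiring pl tm z one"
  shows "\<And>a b. pl a b = pl b a"
    and "\<And>a b c. Option.bind (pl a b) (\<lambda>x. pl x c) = Option.bind (pl b c) (\<lambda>y. pl a y)"
    and "\<And>a. pl z a = Some a"
    and "\<And>u v w s. pl v w = Some s \<Longrightarrow> pl (tm u v) (tm u w) = Some (tm u s)"
    and "\<And>u v w s. pl v w = Some s \<Longrightarrow> pl (tm v u) (tm w u) = Some (tm s u)"
    and "\<And>a. tm z a = z" and "\<And>a. tm a z = z"
  using assms unfolding partial_semiring_def by blast+

lemma assoc_some:
  assumes ps: "partial_semiring pl tm z one"
    and "pl a b = Some ab" "pl ab c = Some r"
  shows "\<exists>bc. pl b c = Some bc \<and> pl a bc = Some r"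
proof -
  have "Option.bind (pl a b) (\<lambda>x. pl x c) = Option.bind (pl b c) (\<lambda>y. pl a y)"
    using ps_facts(2)[OF ps] .
  with assms show ?thesis by (cases "pl b c") auto
qed

lemma assoc_some2:
  assumes ps: "partial_semiring pl tm z one"
    and "pl b c = Some bc" "pl a bc = Some r"
  shows "\<exists>ab. pl a b = Some ab \<and> pl ab c = Some r"
proof -
  have "Option.bind (pl a b) (\<lambda>x. pl x c) = Option.bind (pl b c) (\<lambda>y. pl a y)"
    using ps_facts(2)[OF ps] .
  with assms show ?thesis by (cases "pl a b") auto
qed

lemma lsum_swap:
  assumes ps: "partial_semiring pl tm z one"
  shows "lsum pl z (x # y # xs) = lsum pl z (y # x # xs)"
proof (cases "lsum pl z xs")
  case None then show ?thesis by simp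
next
  case (Some s)
  have 1: "Option.bind (pl x y) (\<lambda>t. pl t s) = Option.bind (pl y s) (\<lambda>u. pl x u)"
    using ps_facts(2)[OF ps] .
  have 2: "Option.bind (pl y x) (\<lambda>t. pl t s) = Option.bind (pl x s) (\<lambda>u. pl y u)"
    using ps_facts(2)[OF ps] .
  have "pl x y = pl y x" using ps_facts(1)[OF ps] .
  with 1 2 Some show ?thesis by simp
qed

lemma lsum_move:
  assumes ps: "partial_semiring pl tm z one"
  shows "lsum pl z (ys1 @ x # ys2) = lsum pl z (x # ys1 @ ys2)"
proof (induction ys1)
  case Nil then show ?case by simp
next
  case (Cons y ys1)
  have "lsum pl z ((y # ys1) @ x # ys2) = lsum pl z (y # x # ys1 @ ys2)"
    using Cons by simp
  also have "\<dots> = lsum pl z (x # y # ys1 @ ys2)" using lsum_swap[OF ps] .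
  finally show ?case by simp
qed

lemma lsum_perm:
  assumes ps: "partial_semiring pl tm z one"
  shows "mset xs = mset ys \<Longrightarrow> lsum pl z xs = lsum pl z ys"
proof (induction xs arbitrary: ys)
  case Nil
  then have "ys = []" by simp
  then show ?case by simp
next
  case (Cons x xs)
  then have "x \<in> set ys" by (metis list.set_intros(1) set_mset_mset)
  then obtain ys1 ys2 where ys: "ys = ys1 @ x # ys2" by (meson split_list)
  have "mset xs = mset (ys1 @ ys2)" using Cons.prems ys by simp
  then have "lsum pl z xs = lsum pl z (ys1 @ ys2)" using Cons.IH by blast
  then show ?case using ys lsum_move[OF ps] by simp
qed

lemma lsum_append:
  assumes ps: "partial_semiring pl tm z one"
  shows "lsum pl z (xs @ ys) = Option.bind (lsum pl z ys) (\<lambda>t. Option.bind (lsum pl z xs) (\<lambda>s. pl s t))"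
proof (induction xs)
  case Nil
  then show ?case using ps_facts(3)[OF ps] by (cases "lsum pl z ys") auto
next
  case (Cons x xs)
  show ?case
  proof (cases "lsum pl z ys")
    case None then show ?thesis using Cons by simp
  next
    case (Some t)
    show ?thesis
    proof (cases "lsum pl z xs")
      case None then show ?thesis using Cons Some by simp
    next
      case (Some s)
      have "Option.bind (pl x s) (\<lambda>u. pl u t) = Option.bind (pl s t) (\<lambda>y. pl x y)"
        using ps_facts(2)[OF ps] .
      then show ?thesis using Cons Some \<open>lsum pl z ys = Some t\<close> by simp
    qed
  qed
qed

lemma fsum_eq:
  assumes ps: "partial_semiring pl tm z one"
    and "distinct xs" "set xs = F"
  shows "fsum pl z f F = lsum pl z (map f xs)"
proof -
  define ys where "ys = (SOME xs. distinct xs \<and> set xs = F)"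
  have "\<exists>xs. distinct xs \<and> set xs = F" using assms by blast
  then have ys: "distinct ys \<and> set ys = F" unfolding ys_def by (rule someI_ex)
  then have "mset ys = mset xs" using assms by (metis set_eq_iff_mset_eq_distinct)
  then have "mset (map f ys) = mset (map f xs)" by simp
  then show ?thesis unfolding fsum_def ys_def[symmetric] using lsum_perm[OF ps] by blast
qed

lemma lsum_filter:
  assumes ps: "partial_semiring pl tm z one"
  shows "lsum pl z (map f xs) = lsum pl z (map f (filter (\<lambda>x. f x \<noteq> z) xs))"
proof (induction xs)
  case Nil then show ?case by simp
next
  case (Cons x xs)
  show ?case
  proof (cases "f x = z")
    case True
    then show ?thesis using Cons ps_facts(3)[OF ps]
      by (cases "lsum pl z (map f (filter (\<lambda>x. f x \<noteq> z) xs))") simp_all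
  next
    case False
    then show ?thesis using Cons by simp
  qed
qed

lemma lsum_scale:
  assumes ps: "partial_semiring pl tm z one"
  shows "lsum pl z (map f xs) = Some X \<Longrightarrow> lsum pl z (map (\<lambda>x. tm a (f x)) xs) = Some (tm a X)"
proof (induction xs arbitrary: X)
  case Nil then show ?case using ps_facts(7)[OF ps] by simp
next
  case (Cons x xs)
  then obtain X' where X': "lsum pl z (map f xs) = Some X'" "pl (f x) X' = Some X"
    by (cases "lsum pl z (map f xs)") auto
  show ?case using Cons.IH[OF X'(1)] ps_facts(4)[OF ps X'(2)] by simp
qed

lemma rearr:
  assumes ps: "partial_semiring pl tm z one"
    and "pl x X' = Some X" "pl y Y' = Some Y" "pl X Y = Some S" "pl x y = Some xy"
  shows "\<exists>T. pl X' Y' = Some T \<and> pl xy T = Some S"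
proof -
  obtain u where u: "pl X' Y = Some u" "pl x u = Some S"
    using assoc_some[OF ps assms(2) assms(4)] by blast
  have "pl Y X' = Some u" using u ps_facts(1)[OF ps] by metis
  then obtain v where v: "pl Y' X' = Some v" "pl y v = Some u"
    using assoc_some[OF ps assms(3)] by blast
  obtain ab where ab: "pl x y = Some ab" "pl ab v = Some S"
    using assoc_some2[OF ps v(2) u(2)] by blast
  then show ?thesis using assms(5) v(1) ps_facts(1)[OF ps] by (metis option.inject)
qed

lemma lsum_zip:
  assumes ps: "partial_semiring pl tm z one"
    and h: "\<forall>x. pl (f x) (g x) = Some (h x)"
  shows "lsum pl z (map f xs) = Some X \<Longrightarrow> lsum pl z (map g xs) = Some Y \<Longrightarrow> pl X Y = Some S
    \<Longrightarrow> lsum pl z (map h xs) = Some S"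
proof (induction xs arbitrary: X Y S)
  case Nil then show ?case using ps_facts(3)[OF ps] by simp
next
  case (Cons x xs)
  then obtain X' where X': "lsum pl z (map f xs) = Some X'" "pl (f x) X' = Some X"
    by (cases "lsum pl z (map f xs)") auto
  from Cons obtain Y' where Y': "lsum pl z (map g xs) = Some Y'" "pl (g x) Y' = Some Y"
    by (cases "lsum pl z (map g xs)") auto
  obtain T where T: "pl X' Y' = Some T" "pl (h x) T = Some S"
    using rearr[OF ps X'(2) Y'(2) Cons.prems(3) h[rule_format]] by blast
  show ?case using Cons.IH[OF X'(1) Y'(1) T(1)] T(2) by simp
qed

lemma defined_down:
  assumes ps: "partial_semiring pl tm z one"
    and "pl u' v' = Some r" "nat_le pl u u'"
  shows "pl u v' \<noteq> None"
proof -
  obtain w where w: "pl u w = Some u'" using assms(3) unfolding nat_le_def by blast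
  obtain t where t: "pl w v' = Some t" "pl u t = Some r"
    using assoc_some[OF ps w assms(2)] by blast
  have "Option.bind (pl u v') (\<lambda>x. pl x w) = Option.bind (pl v' w) (\<lambda>y. pl u y)"
    using ps_facts(2)[OF ps] .
  moreover have "pl v' w = Some t" using t ps_facts(1)[OF ps] by metis
  ultimately show ?thesis using t by (cases "pl u v'") auto
qed

lemma le_mult:
  assumes ps: "partial_semiring pl tm z one" and "nat_le pl u v"
  shows "nat_le pl (tm a u) (tm a v)"
  using assms ps_facts(4)[OF ps] unfolding nat_le_def by blast

lemma top_def:
  assumes ps: "partial_semiring pl tm z one" and top: "has_top pl"
    and ab: "pl a b \<noteq> None"
  shows "pl (tm a x) (tm b y) \<noteq> None"
proof -
  obtain T where T: "\<forall>u. nat_le pl u T" using top unfolding has_top_def by blast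
  obtain s where "pl a b = Some s" using ab by blast
  then have r: "pl (tm a T) (tm b T) = Some (tm s T)" using ps_facts(5)[OF ps] by blast
  have "pl (tm a x) (tm b T) \<noteq> None"
    using defined_down[OF ps r le_mult[OF ps, of x T]] T by blast
  then obtain r2 where "pl (tm b T) (tm a x) = Some r2" using ps_facts(1)[OF ps] by fastforce
  then have "pl (tm b y) (tm a x) \<noteq> None"
    using defined_down[OF ps _ le_mult[OF ps, of y T]] T by blast
  then show ?thesis using ps_facts(1)[OF ps] by metis
qed

lemma fsum_split:
  assumes ps: "partial_semiring pl tm z one"
    and "finite G" "F \<subseteq> G" "fsum pl z f G = Some g"
  shows "\<exists>s. fsum pl z f F = Some s \<and> nat_le pl s g"
proof -
  have "finite F" using assms finite_subset by blast
  obtain xs where xs: "distinct xs" "set xs = F" using finite_distinct_list[OF \<open>finite F\<close>] by blast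
  obtain ys where ys: "distinct ys" "set ys = G - F" using finite_distinct_list assms(2) by (meson finite_Diff)
  have "distinct (xs @ ys)" "set (xs @ ys) = G" using xs ys assms(3) by auto
  then have "fsum pl z f G = lsum pl z (map f xs @ map f ys)" using fsum_eq[OF ps, of "xs @ ys" G f] by simp
  then have e: "Some g = Option.bind (lsum pl z (map f ys)) (\<lambda>t. Option.bind (lsum pl z (map f xs)) (\<lambda>s. pl s t))"
    using assms(4) lsum_append[OF ps] by simp
  then obtain t s where "lsum pl z (map f ys) = Some t" "lsum pl z (map f xs) = Some s" "pl s t = Some g"
    by (cases "lsum pl z (map f ys)"; cases "lsum pl z (map f xs)") auto
  then show ?thesis using fsum_eq[OF ps xs] unfolding nat_le_def by auto
qed

theorem lemmaA7:
  fixes pl :: "'u \<Rightarrow> 'u \<Rightarrow> 'u option" and tm :: "'u \<Rightarrow> 'u \<Rightarrow> 'u"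
    and z one :: 'u and e1 e2 :: "('s, 'u) expr"
  assumes "pcs_semiring pl tm z one"
    and "compatible pl z one e1 e2"
  shows "\<forall>\<sigma> (m1::'s \<Rightarrow> 'u) (m2::'s \<Rightarrow> 'u). m1 \<in> W pl z \<longrightarrow> m2 \<in> W pl z \<longrightarrow>
           (\<exists>m \<in> W pl z. \<forall>\<sigma>'. pl (tm (eval_expr z one e1 \<sigma>) (m1 \<sigma>'))
                                   (tm (eval_expr z one e2 \<sigma>) (m2 \<sigma>')) = Some (m \<sigma>'))"
proof (intro allI impI)
  fix \<sigma> and m1 m2 :: "'s \<Rightarrow> 'u"
  assume m1: "m1 \<in> W pl z" and m2: "m2 \<in> W pl z"
  have ps: "partial_semiring pl tm z one" and top: "has_top pl"
    and sc: "scott_continuous pl tm"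
    using assms(1) unfolding pcs_semiring_def by auto
  define a where "a = eval_expr z one e1 \<sigma>"
  define b where "b = eval_expr z one e2 \<sigma>"
  have ab: "pl a b \<noteq> None" using assms(2) unfolding compatible_def a_def b_def by blast
  define m where "m = (\<lambda>x. the (pl (tm a (m1 x)) (tm b (m2 x))))"
  have pw: "\<forall>x. pl (tm a (m1 x)) (tm b (m2 x)) = Some (m x)"
    using top_def[OF ps top ab] unfolding m_def by auto
  have suppm: "supp z m \<subseteq> supp z m1 \<union> supp z m2"
  proof
    fix x assume x: "x \<in> supp z m"
    show "x \<in> supp z m1 \<union> supp z m2"
    proof (rule ccontr)
      assume "x \<notin> supp z m1 \<union> supp z m2"
      then have "m1 x = z" "m2 x = z" unfolding supp_def by auto
      then have "pl (tm a (m1 x)) (tm b (m2 x)) = Some z" using ps_facts(3,7)[OF ps] by simp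
      then have "m x = z" using pw by (metis option.inject)
      then show False using x unfolding supp_def by simp
    qed
  qed
  have cnt: "countable (supp z m)"
  proof -
    have "countable (supp z m1)" "countable (supp z m2)" using m1 m2 unfolding W_def by auto
    then have "countable (supp z m1 \<union> supp z m2)" by simp
    then show ?thesis using suppm countable_subset by blast
  qed
  have fdef: "fsum pl z m F \<noteq> None" if F: "finite F" "F \<subseteq> supp z m" for F
  proof -
    obtain xs where xs: "distinct xs" "set xs = F" using finite_distinct_list[OF F(1)] by blast
    have part: "\<exists>X. lsum pl z (map mi xs) = Some X" if mi: "mi \<in> W pl z" and sub: "F \<subseteq> supp z m1 \<union> supp z m2"
      for mi :: "'s \<Rightarrow> 'u"
    proof -
      obtain s where hs: "has_sum_in pl z mi (supp z mi) s" using mi unfolding W_def by blast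
      let ?ys = "filter (\<lambda>x. mi x \<noteq> z) xs"
      have "distinct ?ys" "set ?ys = F \<inter> supp z mi" using xs unfolding supp_def by auto
      then have "fsum pl z mi (F \<inter> supp z mi) = lsum pl z (map mi ?ys)" using fsum_eq[OF ps] by blast
      moreover have "fsum pl z mi (F \<inter> supp z mi) \<noteq> None"
        using hs F(1) unfolding has_sum_in_def by blast
      ultimately show ?thesis using lsum_filter[OF ps, of mi xs] by auto
    qed
    obtain X1 where X1: "lsum pl z (map m1 xs) = Some X1" using part[OF m1] F suppm by blast
    obtain X2 where X2: "lsum pl z (map m2 xs) = Some X2" using part[OF m2] F suppm by blast
    have s1: "lsum pl z (map (\<lambda>x. tm a (m1 x)) xs) = Some (tm a X1)" using lsum_scale[OF ps X1] .
    have s2: "lsum pl z (map (\<lambda>x. tm b (m2 x)) xs) = Some (tm b X2)" using lsum_scale[OF ps X2] .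
    obtain S where S: "pl (tm a X1) (tm b X2) = Some S" using top_def[OF ps top ab] by blast
    have "lsum pl z (map m xs) = Some S"
      using lsum_zip[OF ps _ s1 s2 S, of m] pw by blast
    then show ?thesis using fsum_eq[OF ps xs] by simp
  qed
  define D where "D = {the (fsum pl z m F) | F. finite F \<and> F \<subseteq> supp z m}"
  have dir: "directed_in (nat_le pl) D"
    unfolding directed_in_def
  proof (intro conjI ballI)
    show "D \<noteq> {}" unfolding D_def by blast
  next
    fix x y assume "x \<in> D" "y \<in> D"
    then obtain F G where FG: "x = the (fsum pl z m F)" "finite F" "F \<subseteq> supp z m"
      "y = the (fsum pl z m G)" "finite G" "G \<subseteq> supp z m" unfolding D_def by blast
    have fin: "finite (F \<union> G)" "F \<union> G \<subseteq> supp z m" using FG by auto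
    then obtain g where g: "fsum pl z m (F \<union> G) = Some g" using fdef by blast
    have "g = the (fsum pl z m (F \<union> G))" using g by simp
    then have "g \<in> D" using fin unfolding D_def by blast
    moreover have "nat_le pl x g" using fsum_split[OF ps fin(1) _ g, of F] FG by auto
    moreover have "nat_le pl y g" using fsum_split[OF ps fin(1) _ g, of G] FG by auto
    ultimately show "\<exists>w\<in>D. nat_le pl x w \<and> nat_le pl y w" by blast
  qed
  then obtain s where "is_lub_in (nat_le pl) D s" using sc unfolding scott_continuous_def by blast
  then have "has_sum_in pl z m (supp z m) s" unfolding has_sum_in_def D_def using fdef by blast
  then have "m \<in> W pl z" using cnt unfolding W_def by blast
  then show "\<exists>m \<in> W pl z. \<forall>\<sigma>'. pl (tm (eval_expr z one e1 \<sigma>) (m1 \<sigma>'))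
                                   (tm (eval_expr z one e2 \<sigma>) (m2 \<sigma>')) = Some (m \<sigma>')"
    using pw unfolding a_def b_def by blast
qed

end
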